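(* Let $\mu=(\mu_1,\dots,\mu_r)$ be a partition with $\mu_1\ge\cdots\ge\mu_r>0$. Then $\mu$ is both $2$-regular and a $4$-core if and only if exactly one of the following holds: (i) $\mu_r=1$ and there exists $0\le s\le r-1$ such that $\mu_i-\mu_{i+1}=3$ for all $1\le i\le s$ and $\mu_i-\mu_{i+1}=1$ for all $s+1\le i\le r-1$; (ii) $\mu_r\in\{2,3\}$ and $\mu_i-\mu_{i+1}=3$ for all $1\le i\le r-1$.
   Context: A partition is $2$-regular if no two nonzero parts are equal. A partition is a $4$-core if no hook length of its Young diagram is divisible by $4$. *)

theory Defs
  imports Main
begin

text \<open>Cells of the Young diagram are pairs (i,j) with i < r and j < mu!i (0-indexed).\<close>

definition is_partition :: "nat list \<Rightarrow> bool" where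
  "is_partition mu \<longleftrightarrow> sorted_wrt (\<ge>) mu \<and> (\<forall>x\<in>set mu. 0 < x)"

definition cells :: "nat list \<Rightarrow> (nat \<times> nat) set" where
  "cells mu = {(i, j). i < length mu \<and> j < mu ! i}"

text \<open>hook length = arm + leg + 1\<close>
definition hook_length :: "nat list \<Rightarrow> nat \<Rightarrow> nat \<Rightarrow> nat" where
  "hook_length mu i j =
     (mu ! i - j - 1) + card {k. i < k \<and> k < length mu \<and> j < mu ! k} + 1"

definition two_regular :: "nat list \<Rightarrow> bool" where
  "two_regular mu \<longleftrightarrow> (\<forall>a < length mu. \<forall>b < length mu. a \<noteq> b \<longrightarrow> mu ! a \<noteq> mu ! b)"

definition is_core :: "nat \<Rightarrow> nat list \<Rightarrow> bool" where
  "is_core t mu \<longleftrightarrow> (\<forall>(i, j) \<in> cells mu. \<not> t dvd hook_length mu i j)"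

end

theory Submission imports Defs begin

lemma hook_Suc: "hook_length (a#v) (Suc i) j = hook_length v i j"
proof -
  have "{k. Suc i < k \<and> k < length (a#v) \<and> j < (a#v)!k} = Suc ` {k. i<k \<and> k<length v \<and> j < v!k}"
    by (auto simp: image_iff gr0_conv_Suc) (metis Suc_lessE Suc_less_SucD nth_Cons_Suc)
  then show ?thesis unfolding hook_length_def by (simp add: card_image)
qed

lemma hook_0: "hook_length (a#v) 0 j = a - j - 1 + card {k. k < length v \<and> j < v!k} + 1"
proof -
  have "{k. 0 < k \<and> k < length (a#v) \<and> j < (a#v)!k} = Suc ` {k. k<length v \<and> j < v!k}"
    by (auto simp: image_iff gr0_conv_Suc)
  then show ?thesis unfolding hook_length_def by (simp add: card_image)
qed

lemma hook_big: assumes "sorted_wrt (\<ge>) (a#v)" "v \<noteq> [] \<longrightarrow> hd v \<le> j" "j < a"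
  shows "hook_length (a#v) 0 j = a - j"
proof -
  have "{k. k < length v \<and> j < v!k} = {}"
  proof (cases v)
    case (Cons b w)
    have "\<And>k. k < length v \<Longrightarrow> v!k \<le> b"
    proof -
      fix k assume "k < length v"
      then show "v!k \<le> b" using assms(1) unfolding Cons
        by (cases k) (auto simp: nth_mem)
    qed
    then show ?thesis using assms(2) Cons by force
  qed simp
  then have c: "card {k. k < length v \<and> j < v!k} = 0" by simp
  show ?thesis using assms(3) unfolding hook_0 c by simp
qed

lemma hook_small: assumes "sorted_wrt (\<ge>) (a#b#w)" "j < b"
  shows "hook_length (a#b#w) 0 j = (a - b) + 1 + hook_length (b#w) 0 j"
proof -
  have e: "{k. k < length (b#w) \<and> j < (b#w)!k} = insert 0 (Suc ` {k. k < length w \<and> j < w!k})"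
    using assms(2) by (auto simp: image_iff gr0_conv_Suc) (metis less_Suc_eq_0_disj nth_Cons_Suc)
  have f: "finite {k. k < length w \<and> j < w!k}" by simp
  have "b \<le> a" using assms(1) by simp
  then show ?thesis using assms(2) unfolding hook_0 e by (simp add: card_image f)
qed

lemma core_Cons: "is_core t (a#v) \<longleftrightarrow> (\<forall>j<a. \<not> t dvd hook_length (a#v) 0 j) \<and> is_core t v"
  unfolding is_core_def cells_def
  apply (auto simp: hook_Suc)
   apply (metis hook_Suc Suc_less_eq nth_Cons_Suc)
  apply (case_tac aa) apply (auto simp: hook_Suc)
  done

definition D :: "nat list \<Rightarrow> nat \<Rightarrow> int" where
  "D mu i = int (mu!i) - int (mu!Suc i)"
definition C1 :: "nat list \<Rightarrow> bool" where
  "C1 mu = (last mu = 1 \<and> (\<exists>s \<le> length mu - 1. (\<forall>i<s. D mu i = 3) \<and> (\<forall>i. s \<le> i \<and> i < length mu - 1 \<longrightarrow> D mu i = 1)))"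
definition C2 :: "nat list \<Rightarrow> bool" where
  "C2 mu = (last mu \<in> {2,3} \<and> (\<forall>i < length mu - 1. D mu i = 3))"
definition S :: "nat list \<Rightarrow> bool" where
  "S mu = (last mu = 1 \<and> (\<forall>i < length mu - 1. D mu i = 1))"

lemma D0: "D (a#b#w) 0 = int a - int b" by (simp add: D_def)
lemma DSuc: "D (a#v) (Suc i) = D v i" by (simp add: D_def)

lemma allSuc: "(\<forall>i<Suc n. P i) \<longleftrightarrow> P 0 \<and> (\<forall>i<n. P (Suc i))"
  using less_Suc_eq_0_disj by auto

lemma C2_Cons: "C2 (a#b#w) \<longleftrightarrow> int a - int b = 3 \<and> C2 (b#w)"
  proof -
  have "(\<forall>i< length (a#b#w) - 1. D (a#b#w) i = 3) \<longleftrightarrow> D (a#b#w) 0 = 3 \<and> (\<forall>i<length (b#w) - 1. D (b#w) i = 3)"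
    using allSuc[of "length w" "\<lambda>i. D (a#b#w) i = 3"] by (simp add: DSuc del: D_def)
  then show ?thesis unfolding C2_def D0 by auto
qed

lemma S_Cons: "S (a#b#w) \<longleftrightarrow> int a - int b = 1 \<and> S (b#w)"
  proof -
  have "(\<forall>i< length (a#b#w) - 1. D (a#b#w) i = 1) \<longleftrightarrow> D (a#b#w) 0 = 1 \<and> (\<forall>i<length (b#w) - 1. D (b#w) i = 1)"
    using allSuc[of "length w" "\<lambda>i. D (a#b#w) i = 1"] by (simp add: DSuc del: D_def)
  then show ?thesis unfolding S_def D0 by auto
qed

lemma S_C1: "S v \<Longrightarrow> C1 v"
  unfolding S_def C1_def by auto

lemma exSuc: "(\<exists>s \<le> Suc n. A s) \<longleftrightarrow> A 0 \<or> (\<exists>s \<le> n. A (Suc s))"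
proof
  assume "\<exists>s \<le> Suc n. A s"
  then obtain s where "s \<le> Suc n" "A s" by blast
  then show "A 0 \<or> (\<exists>s \<le> n. A (Suc s))" by (cases s) auto
next
  assume "A 0 \<or> (\<exists>s \<le> n. A (Suc s))"
  then show "\<exists>s \<le> Suc n. A s" by (metis Suc_le_mono zero_le)
qed

lemma C1_Cons: "C1 (a#b#w) \<longleftrightarrow> (int a - int b = 1 \<and> S (b#w)) \<or> (int a - int b = 3 \<and> C1 (b#w))"
proof -
  let ?A = "\<lambda>s. (\<forall>i<s. D (a#b#w) i = 3) \<and> (\<forall>i. s \<le> i \<and> i < length (a#b#w) - 1 \<longrightarrow> D (a#b#w) i = 1)"
  have ex: "(\<exists>s \<le> Suc (length w). ?A s) \<longleftrightarrow> ?A 0 \<or> (\<exists>s \<le> length w. ?A (Suc s))"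
    by (rule exSuc)
  have a0: "?A 0 \<longleftrightarrow> int a - int b = 1 \<and> (\<forall>i < length w. D (b#w) i = 1)"
    using allSuc[of "length w" "\<lambda>i. D (a#b#w) i = 1"] by (auto simp: D0 DSuc simp del: D_def)
  have aS: "?A (Suc s) \<longleftrightarrow> int a - int b = 3 \<and> (\<forall>i<s. D (b#w) i = 3) \<and> (\<forall>i. s \<le> i \<and> i < length w \<longrightarrow> D (b#w) i = 1)" for s
  proof -
    have "(\<forall>i<Suc s. D (a#b#w) i = 3) \<longleftrightarrow> int a - int b = 3 \<and> (\<forall>i<s. D (b#w) i = 3)"
      using allSuc[of s "\<lambda>i. D (a#b#w) i = 3"] by (auto simp: D0 DSuc simp del: D_def)
    moreover have "(\<forall>i. Suc s \<le> i \<and> i < length (a#b#w) - 1 \<longrightarrow> D (a#b#w) i = 1) \<longleftrightarrow> (\<forall>i. s \<le> i \<and> i < length w \<longrightarrow> D (b#w) i = 1)"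
    proof
      assume h: "\<forall>i. Suc s \<le> i \<and> i < length (a#b#w) - 1 \<longrightarrow> D (a#b#w) i = 1"
      show "\<forall>i. s \<le> i \<and> i < length w \<longrightarrow> D (b#w) i = 1"
        using h[rule_format, of "Suc _"] by (auto simp: DSuc simp del: D_def)
    next
      assume h: "\<forall>i. s \<le> i \<and> i < length w \<longrightarrow> D (b#w) i = 1"
      show "\<forall>i. Suc s \<le> i \<and> i < length (a#b#w) - 1 \<longrightarrow> D (a#b#w) i = 1"
      proof (intro allI impI)
        fix i assume "Suc s \<le> i \<and> i < length (a#b#w) - 1"
        then obtain i' where "i = Suc i'" "s \<le> i'" "i' < length w" by (cases i) auto
        then show "D (a#b#w) i = 1" using h by (simp add: DSuc del: D_def)
      qed
    qed
    ultimately show ?thesis by simp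
  qed
  show ?thesis unfolding C1_def S_def using ex a0 aS by auto
qed

lemma two_regular_distinct: "two_regular mu \<longleftrightarrow> distinct mu"
  unfolding two_regular_def distinct_conv_nth by blast

lemma part_tl: "is_partition (x#v) \<Longrightarrow> is_partition v"
  unfolding is_partition_def by simp

lemma part_sorted: "is_partition v \<Longrightarrow> sorted_wrt (\<ge>) v"
  unfolding is_partition_def by simp

lemma part_head: "is_partition (x#v) \<Longrightarrow> 0 < x"
  unfolding is_partition_def by simp

lemma part_le: "is_partition (x#y#v) \<Longrightarrow> y \<le> x"
  unfolding is_partition_def by simp

lemma S_odd: "is_partition (x#v) \<Longrightarrow> S (x#v) \<Longrightarrow> j < x \<Longrightarrow> odd (hook_length (x#v) 0 j)"
proof (induction v arbitrary: x j)
  case Nil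
  then have "x = 1" by (simp add: S_def)
  then have "j = 0" using Nil by simp
  have "hook_length [x] 0 j = x - j"
    using hook_big[of x "[]" j] Nil by simp
  then show ?case using \<open>x = 1\<close> \<open>j = 0\<close> by simp
next
  case (Cons y r)
  have p: "is_partition (y#r)" using Cons.prems part_tl by blast
  have xy: "int x - int y = 1" "S (y#r)" using Cons.prems S_Cons by auto
  show ?case
  proof (cases "y \<le> j")
    case True
    then have "hook_length (x#y#r) 0 j = x - j"
      using hook_big[OF part_sorted[OF Cons.prems(1)]] Cons.prems(3) by simp
    moreover have "j = y" using True xy Cons.prems by simp
    moreover have "x = y + 1" using xy by simp
    ultimately show ?thesis by simp
  next
    case False
    then have "hook_length (x#y#r) 0 j = (x - y) + 1 + hook_length (y#r) 0 j"
      using hook_small[OF part_sorted[OF Cons.prems(1)]] by simp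
    moreover have "odd (hook_length (y#r) 0 j)" using Cons.IH[OF p xy(2)] False by simp
    moreover have "x - y = 1" using xy by simp
    ultimately show ?thesis by simp
  qed
qed

lemma two_hook: assumes "is_partition (b#w)" "C1 (b#w) \<or> C2 (b#w)" "\<not> S (b#w)"
  shows "\<exists>j<b. hook_length (b#w) 0 j = 2"
proof (cases w)
  case Nil
  have "b \<noteq> 1" using assms(3) Nil by (simp add: S_def)
  then have "C2 [b]" using assms(2) Nil by (auto simp: C1_def)
  then have b: "b = 2 \<or> b = 3" by (simp add: C2_def)
  have "hook_length [b] 0 (b - 2) = b - (b - 2)"
    using hook_big[of b "[]" "b-2"] b by auto
  then show ?thesis using Nil b by (intro exI[of _ "b - 2"]) auto
next
  case (Cons c r)
  have "int b - int c = 3"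
    using assms(2,3) unfolding Cons C1_Cons C2_Cons S_Cons by auto
  moreover have "hook_length (b#c#r) 0 (c+1) = b - (c+1)"
    using hook_big[OF part_sorted[OF assms(1)[unfolded Cons]], of "c+1"] calculation by simp
  ultimately show ?thesis using Cons by (intro exI[of _ "c+1"]) auto
qed

lemma one_hook: assumes "is_partition (b#w)" "distinct (b#w)"
  shows "hook_length (b#w) 0 (b - 1) = 1"
proof -
  have b: "0 < b" using assms(1) part_head by blast
  have "w \<noteq> [] \<longrightarrow> hd w \<le> b - 1"
  proof
    assume "w \<noteq> []"
    then have "hd w \<in> set w" by simp
    then have "hd w \<le> b" "hd w \<noteq> b" using assms part_sorted[OF assms(1)] by auto
    then show "hd w \<le> b - 1" by simp
  qed
  then show ?thesis using hook_big[OF part_sorted[OF assms(1)], of "b-1"] b by simp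
qed

lemma core_nil: "is_core t []" by (simp add: is_core_def cells_def)

lemma main: "is_partition (a#v) \<Longrightarrow> (distinct (a#v) \<and> is_core 4 (a#v)) \<longleftrightarrow> (C1 (a#v) \<or> C2 (a#v))"
proof (induction v arbitrary: a)
  case Nil
  have a: "0 < a" using Nil part_head by blast
  have h: "hook_length [a] 0 j = a - j" if "j < a" for j
    using hook_big[of a "[]" j] that by simp
  have "is_core 4 [a] \<longleftrightarrow> a \<in> {1,2,3}"
  proof
    assume c: "is_core 4 [a]"
    show "a \<in> {1,2,3}"
    proof (rule ccontr)
      assume "a \<notin> {1,2,3}"
      then have "4 \<le> a" using a by auto
      then have "hook_length [a] 0 (a - 4) = 4" using h[of "a-4"] by simp
      then show False using c \<open>4 \<le> a\<close> unfolding core_Cons by (metis diff_less dvd_refl zero_less_numeral a)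
    qed
  next
    assume "a \<in> {1,2,3}"
    then show "is_core 4 [a]" unfolding core_Cons using h core_nil by (auto dest: dvd_imp_le)
  qed
  moreover have "C1 [a] \<longleftrightarrow> a = 1" by (simp add: C1_def)
  moreover have "C2 [a] \<longleftrightarrow> a \<in> {2,3}" by (simp add: C2_def)
  ultimately show ?case by auto
next
  case (Cons b w)
  have p: "is_partition (b#w)" using Cons.prems part_tl by blast
  have ba: "b \<le> a" using Cons.prems part_le by blast
  have b0: "0 < b" using p part_head by blast
  have IH: "(distinct (b#w) \<and> is_core 4 (b#w)) \<longleftrightarrow> (C1 (b#w) \<or> C2 (b#w))" using Cons.IH[OF p] .
  have srt: "sorted_wrt (\<ge>) (a#b#w)" using Cons.prems part_sorted by blast
  have hbig: "hook_length (a#b#w) 0 j = a - j" if "b \<le> j" "j < a" for j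
    using hook_big[of a "b#w" j] srt that by simp
  have hsmall: "hook_length (a#b#w) 0 j = (a - b) + 1 + hook_length (b#w) 0 j" if "j < b" for j
    using hook_small[OF srt that] .
  have dist: "distinct (a#b#w) \<longleftrightarrow> distinct (b#w) \<and> b < a"
  proof -
    have "a \<notin> set (b#w) \<longleftrightarrow> b < a"
    proof
      assume "a \<notin> set (b#w)" then show "b < a" using ba by auto
    next
      assume "b < a"
      moreover have "\<forall>x\<in>set w. x \<le> b" using srt by simp
      ultimately show "a \<notin> set (b#w)" by auto
    qed
    then show ?thesis by auto
  qed
  show ?case
  proof
    assume L: "distinct (a#b#w) \<and> is_core 4 (a#b#w)"
    then have dbw: "distinct (b#w)" and lt: "b < a" using dist by auto
    have row: "\<forall>j<a. \<not> 4 dvd hook_length (a#b#w) 0 j" and cv: "is_core 4 (b#w)"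
      using L core_Cons by blast+
    have R: "C1 (b#w) \<or> C2 (b#w)" using IH dbw cv by blast
    have "a - b \<le> 3"
    proof (rule ccontr)
      assume "\<not> a - b \<le> 3"
      then have "hook_length (a#b#w) 0 (a - 4) = 4" using hbig[of "a-4"] by simp
      then show False using row \<open>\<not> a - b \<le> 3\<close> by (metis diff_less dvd_refl zero_less_numeral lt gr_implies_not0 not_gr0)
    qed
    moreover have "a - b \<noteq> 2"
    proof
      assume d: "a - b = 2"
      have "hook_length (a#b#w) 0 (b - 1) = 4"
        using hsmall[of "b-1"] one_hook[OF p dbw] d b0 by simp
      then show False using row lt b0 by (metis dvd_refl less_imp_diff_less)
    qed
    moreover have "a - b = 1 \<Longrightarrow> S (b#w)"
    proof (rule ccontr)
      assume d: "a - b = 1" and nS: "\<not> S (b#w)"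
      obtain j where j: "j < b" "hook_length (b#w) 0 j = 2" using two_hook[OF p R nS] by blast
      have "hook_length (a#b#w) 0 j = 4" using hsmall[OF j(1)] j(2) d by simp
      then show False using row j(1) lt by (metis dvd_refl order.strict_trans)
    qed
    ultimately have "(a = b + 1 \<and> S (b#w)) \<or> a = b + 3" using lt by auto
    then show "C1 (a#b#w) \<or> C2 (a#b#w)"
      using R unfolding C1_Cons C2_Cons by auto
  next
    assume R: "C1 (a#b#w) \<or> C2 (a#b#w)"
    then have cases: "(a = b + 1 \<and> S (b#w)) \<or> (a = b + 3 \<and> (C1 (b#w) \<or> C2 (b#w)))"
      unfolding C1_Cons C2_Cons by auto
    then have Rv: "C1 (b#w) \<or> C2 (b#w)" using S_C1 by blast
    then have dbw: "distinct (b#w)" and cv: "is_core 4 (b#w)" using IH by auto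
    have lt: "b < a" using cases by auto
    have row: "\<not> 4 dvd hook_length (a#b#w) 0 j" if j: "j < a" for j
    proof (cases "b \<le> j")
      case True
      then have "hook_length (a#b#w) 0 j = a - j" using hbig j by simp
      moreover have "0 < a - j" "a - j \<le> 3" using True j cases by auto
      ultimately show ?thesis by (auto dest: dvd_imp_le)
    next
      case False
      then have hs: "hook_length (a#b#w) 0 j = (a - b) + 1 + hook_length (b#w) 0 j" using hsmall by simp
      show ?thesis
      proof (cases "a = b + 1 \<and> S (b#w)")
        case True
        then have "odd (hook_length (b#w) 0 j)" using S_odd p False by simp
        then have o: "odd (hook_length (a#b#w) 0 j)" using hs True by simp
        show ?thesis
        proof
          assume "4 dvd hook_length (a#b#w) 0 j"
          then have "2 dvd hook_length (a#b#w) 0 j" using dvd_trans[of "2::nat" 4] by simp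
          then show False using o by simp
        qed
      next
        case nT: False
        then have "a = b + 3" using cases by auto
        moreover have "\<not> 4 dvd hook_length (b#w) 0 j"
          using cv False unfolding core_Cons by simp
        ultimately show ?thesis using hs by simp
      qed
    qed
    show "distinct (a#b#w) \<and> is_core 4 (a#b#w)"
      using dist dbw lt core_Cons cv row by blast
  qed
qed

theorem lemma4p2:
  fixes mu :: "nat list" and r :: nat
  assumes "is_partition mu" and "r = length mu" and "r \<ge> 1"
  defines "P \<equiv> (\<lambda>i. mu ! (i - 1))"
  shows "(two_regular mu \<and> is_core 4 mu) \<longleftrightarrow>
    (let C1 = (P r = 1 \<and> (\<exists>s. s \<le> r - 1 \<and>
                 (\<forall>i. 1 \<le> i \<and> i \<le> s \<longrightarrow> int (P i) - int (P (i + 1)) = 3) \<and>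
                 (\<forall>i. s + 1 \<le> i \<and> i \<le> r - 1 \<longrightarrow> int (P i) - int (P (i + 1)) = 1)));
         C2 = (P r \<in> {2, 3} \<and>
                 (\<forall>i. 1 \<le> i \<and> i \<le> r - 1 \<longrightarrow> int (P i) - int (P (i + 1)) = 3))
     in (C1 \<and> \<not> C2) \<or> (\<not> C1 \<and> C2))"
proof -
  obtain a v where mu: "mu = a#v" using assms(2,3) by (cases mu) auto
  have PR: "P r = last mu" unfolding P_def assms(2) using mu by (simp add: last_conv_nth)
  have Pi: "int (P (Suc k)) - int (P (Suc k + 1)) = D mu k" for k unfolding P_def D_def by simp
  have st1: "(\<forall>i. 1 \<le> i \<and> i \<le> s \<longrightarrow> int (P i) - int (P (i + 1)) = c) \<longleftrightarrow> (\<forall>i<s. D mu i = c)" for s c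
  proof
    assume h: "\<forall>i. 1 \<le> i \<and> i \<le> s \<longrightarrow> int (P i) - int (P (i + 1)) = c"
    show "\<forall>i<s. D mu i = c"
    proof (intro allI impI)
      fix k assume "k < s" then show "D mu k = c" using h[rule_format, of "Suc k"] Pi[of k] by simp
    qed
  next
    assume h: "\<forall>i<s. D mu i = c"
    show "\<forall>i. 1 \<le> i \<and> i \<le> s \<longrightarrow> int (P i) - int (P (i + 1)) = c"
    proof (intro allI impI)
      fix i assume i: "1 \<le> i \<and> i \<le> s"
      then obtain k where k: "i = Suc k" by (cases i) auto
      then show "int (P i) - int (P (i + 1)) = c" using h Pi[of k] i by simp
    qed
  qed
  have st2: "(\<forall>i. s + 1 \<le> i \<and> i \<le> r - 1 \<longrightarrow> int (P i) - int (P (i + 1)) = c) \<longleftrightarrow> (\<forall>i. s \<le> i \<and> i < length mu - 1 \<longrightarrow> D mu i = c)" for s c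
  proof
    assume h: "\<forall>i. s + 1 \<le> i \<and> i \<le> r - 1 \<longrightarrow> int (P i) - int (P (i + 1)) = c"
    show "\<forall>i. s \<le> i \<and> i < length mu - 1 \<longrightarrow> D mu i = c"
    proof (intro allI impI)
      fix k assume "s \<le> k \<and> k < length mu - 1"
      then show "D mu k = c" using h[rule_format, of "Suc k"] Pi[of k] assms(2) by simp
    qed
  next
    assume h: "\<forall>i. s \<le> i \<and> i < length mu - 1 \<longrightarrow> D mu i = c"
    show "\<forall>i. s + 1 \<le> i \<and> i \<le> r - 1 \<longrightarrow> int (P i) - int (P (i + 1)) = c"
    proof (intro allI impI)
      fix i assume i: "s + 1 \<le> i \<and> i \<le> r - 1"
      then obtain k where k: "i = Suc k" by (cases i) auto
      then show "int (P i) - int (P (i + 1)) = c" using h Pi[of k] i assms(2) by simp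
    qed
  qed
  have E1: "(P r = 1 \<and> (\<exists>s. s \<le> r - 1 \<and>
                 (\<forall>i. 1 \<le> i \<and> i \<le> s \<longrightarrow> int (P i) - int (P (i + 1)) = 3) \<and>
                 (\<forall>i. s + 1 \<le> i \<and> i \<le> r - 1 \<longrightarrow> int (P i) - int (P (i + 1)) = 1))) \<longleftrightarrow> C1 mu"
    unfolding C1_def PR st1 st2 using assms(2) by auto
  have E2: "(P r \<in> {2, 3} \<and>
                 (\<forall>i. 1 \<le> i \<and> i \<le> r - 1 \<longrightarrow> int (P i) - int (P (i + 1)) = 3)) \<longleftrightarrow> C2 mu"
  proof -
    have "(\<forall>i. 1 \<le> i \<and> i \<le> r - 1 \<longrightarrow> int (P i) - int (P (i + 1)) = 3) \<longleftrightarrow> (\<forall>i<length mu - 1. D mu i = 3)"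
      using st1[of "r-1" 3] assms(2) by simp
    then show ?thesis unfolding C2_def PR by simp
  qed
  have ex: "\<not> (C1 mu \<and> C2 mu)" unfolding C1_def C2_def by auto
  have M: "(two_regular mu \<and> is_core 4 mu) \<longleftrightarrow> (C1 mu \<or> C2 mu)"
    using main[of a v] assms(1) mu two_regular_distinct by simp
  show ?thesis unfolding Let_def E1 E2 using M ex by blast
qed

end
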